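(* Let $b,\beta_1,\beta_2,\gamma,\alpha,\lambda,\varepsilon_1,\varepsilon_2$ be positive real numbers and $\beta=\beta_1+\beta_2$. Consider the planar system $$s'=b+\gamma+(\varepsilon_2-b-\beta-\gamma)s-\gamma i-\varepsilon_2 s^2+(\varepsilon_1-\varepsilon_2-\lambda)is,$$ $$i'=\beta_1 s+(\varepsilon_2-\varepsilon_1-\alpha-b)i+(\lambda-\varepsilon_2)is+(\varepsilon_1-\varepsilon_2)i^2,$$ and let $\overset{o}{D}_1$ be the interior of $D_1=\{(s,i): s\ge0,\ i\ge0,\ s+i\le1\}$. Then every nondegenerate rest point of this system in $\overset{o}{D}_1$ is hyperbolic.
   Context: A rest point is nondegenerate if all eigenvalues of the linearization there are nonzero, and hyperbolic if all these eigenvalues have nonzero real parts. *)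

theory Defs
  imports "HOL-Analysis.Analysis"
begin

definition field_s :: "real \<Rightarrow> real \<Rightarrow> real \<Rightarrow> real \<Rightarrow> real \<Rightarrow> real \<Rightarrow> real \<Rightarrow> real \<Rightarrow> real \<Rightarrow> real \<Rightarrow> real" where
  "field_s b beta1 beta2 gam alph lam eps1 eps2 s i =
     b + gam + (eps2 - b - (beta1 + beta2) - gam) * s - gam * i - eps2 * s^2
     + (eps1 - eps2 - lam) * i * s"

definition field_i :: "real \<Rightarrow> real \<Rightarrow> real \<Rightarrow> real \<Rightarrow> real \<Rightarrow> real \<Rightarrow> real \<Rightarrow> real \<Rightarrow> real \<Rightarrow> real \<Rightarrow> real" where
  "field_i b beta1 beta2 gam alph lam eps1 eps2 s i =
     beta1 * s + (eps2 - eps1 - alph - b) * i + (lam - eps2) * i * s + (eps1 - eps2) * i^2"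

definition jacobian2 :: "(real \<Rightarrow> real \<Rightarrow> real) \<Rightarrow> (real \<Rightarrow> real \<Rightarrow> real) \<Rightarrow> real \<Rightarrow> real \<Rightarrow> real^2^2" where
  "jacobian2 F G s i = (\<chi> r c.
     if r = 1 then (if c = 1 then deriv (\<lambda>x. F x i) s else deriv (\<lambda>y. F s y) i)
     else (if c = 1 then deriv (\<lambda>x. G x i) s else deriv (\<lambda>y. G s y) i))"

definition is_eigenvalue :: "real^'n^'n \<Rightarrow> complex \<Rightarrow> bool" where
  "is_eigenvalue A z \<longleftrightarrow>
     det ((\<chi> r c. (if r = c then z else 0) - complex_of_real (A $ r $ c)) :: complex^'n^'n) = 0"

definition nondegenerate :: "real^'n^'n \<Rightarrow> bool" where
  "nondegenerate A \<longleftrightarrow> (\<forall>z. is_eigenvalue A z \<longrightarrow> z \<noteq> 0)"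

definition hyperbolic :: "real^'n^'n \<Rightarrow> bool" where
  "hyperbolic A \<longleftrightarrow> (\<forall>z. is_eigenvalue A z \<longrightarrow> Re z \<noteq> 0)"

definition D1 :: "(real \<times> real) set" where
  "D1 = {(s, i). s \<ge> 0 \<and> i \<ge> 0 \<and> s + i \<le> 1}"

end

theory Submission
  imports Defs
begin

lemma interior_D1:
  assumes "(s, i) \<in> interior D1"
  shows "s > 0 \<and> i > 0 \<and> s + i < 1"
proof -
  obtain e where e: "e > 0" "ball (s, i) e \<subseteq> D1"
    using assms by (meson mem_interior)
  have d: "dist (s, i) (x, y) < e" if "dist s x < e" "y = i" for x y
    using that e by (simp add: dist_Pair_Pair)
  have "(s - e/2, i) \<in> D1" using e d[of "s - e/2" i] by (auto simp: dist_real_def)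
  moreover have "(s, i - e/2) \<in> D1" using e
    by (intro subsetD[OF e(2)]) (simp add: dist_Pair_Pair dist_real_def)
  moreover have "(s + e/2, i) \<in> D1" using e d[of "s + e/2" i] by (auto simp: dist_real_def)
  ultimately show ?thesis using e by (auto simp: D1_def)
qed

theorem corollary2p5:
  fixes b beta1 beta2 gam alph lam eps1 eps2 s i :: real
  assumes "b > 0" "beta1 > 0" "beta2 > 0" "gam > 0" "alph > 0" "lam > 0" "eps1 > 0" "eps2 > 0"
    and "(s, i) \<in> interior D1"
    and "field_s b beta1 beta2 gam alph lam eps1 eps2 s i = 0"
    and "field_i b beta1 beta2 gam alph lam eps1 eps2 s i = 0"
    and "nondegenerate (jacobian2 (field_s b beta1 beta2 gam alph lam eps1 eps2)
                                  (field_i b beta1 beta2 gam alph lam eps1 eps2) s i)"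
  shows "hyperbolic (jacobian2 (field_s b beta1 beta2 gam alph lam eps1 eps2)
                               (field_i b beta1 beta2 gam alph lam eps1 eps2) s i)"
proof -
  have si: "s > 0" "i > 0" "s + i < 1" using interior_D1[OF assms(9)] by auto
  define r where "r = 1 - s - i"
  have r: "r > 0" using si by (simp add: r_def)
  define Fs where "Fs = (eps2 - b - (beta1 + beta2) - gam) - 2 * eps2 * s + (eps1 - eps2 - lam) * i"
  define Fi where "Fi = - gam + (eps1 - eps2 - lam) * s"
  define Gs where "Gs = beta1 + (lam - eps2) * i"
  define Gi where "Gi = (eps2 - eps1 - alph - b) + (lam - eps2) * s + 2 * (eps1 - eps2) * i"
  have d1: "deriv (\<lambda>x. field_s b beta1 beta2 gam alph lam eps1 eps2 x i) s = Fs"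
    unfolding field_s_def Fs_def
    by (rule DERIV_imp_deriv, (rule derivative_eq_intros refl)+, simp add: algebra_simps)
  have d2: "deriv (\<lambda>y. field_s b beta1 beta2 gam alph lam eps1 eps2 s y) i = Fi"
    unfolding field_s_def Fi_def
    by (rule DERIV_imp_deriv, (rule derivative_eq_intros refl)+, simp add: algebra_simps)
  have d3: "deriv (\<lambda>x. field_i b beta1 beta2 gam alph lam eps1 eps2 x i) s = Gs"
    unfolding field_i_def Gs_def
    by (rule DERIV_imp_deriv, (rule derivative_eq_intros refl)+, simp add: algebra_simps)
  have d4: "deriv (\<lambda>y. field_i b beta1 beta2 gam alph lam eps1 eps2 s y) i = Gi"
    unfolding field_i_def Gi_def
    by (rule DERIV_imp_deriv, (rule derivative_eq_intros refl)+, simp add: algebra_simps)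
  define J where "J = jacobian2 (field_s b beta1 beta2 gam alph lam eps1 eps2)
                               (field_i b beta1 beta2 gam alph lam eps1 eps2) s i"
  have J: "J$1$1 = Fs" "J$1$2 = Fi" "J$2$1 = Gs" "J$2$2 = Gi"
    unfolding J_def jacobian2_def using d1 d2 d3 d4 by auto
  define p where "p = 1/r - 1/s"
  define q where "q = 1/r - 1/i"
  have F0: "field_s b beta1 beta2 gam alph lam eps1 eps2 s i = 0" by fact
  have G0: "field_i b beta1 beta2 gam alph lam eps1 eps2 s i = 0" by fact
  have key: "Fs + Gi + p * field_s b beta1 beta2 gam alph lam eps1 eps2 s i
      + q * field_i b beta1 beta2 gam alph lam eps1 eps2 s i
      = (1 - 1/s) * b - (s/i) * beta1 - (s/r) * beta2 - (r/s) * gam - (i/r) * alph"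
  proof -
    let ?L = "Fs + Gi + p * field_s b beta1 beta2 gam alph lam eps1 eps2 s i
      + q * field_i b beta1 beta2 gam alph lam eps1 eps2 s i"
    let ?R = "(1 - 1/s) * b - (s/i) * beta1 - (s/r) * beta2 - (r/s) * gam - (i/r) * alph"
    have nz: "s * i * r \<noteq> 0" using si r by auto
    have pp: "s * i * r * p = i * (s - r)" "s * i * r * q = s * (i - r)"
      using si r unfolding p_def q_def by (simp_all add: field_simps)
    have "s * i * r * ?L = s * i * r * (Fs + Gi) + (s * i * r * p) * field_s b beta1 beta2 gam alph lam eps1 eps2 s i
      + (s * i * r * q) * field_i b beta1 beta2 gam alph lam eps1 eps2 s i"
      by (simp add: algebra_simps)
    also have "\<dots> = s * i * r * (Fs + Gi) + (i * (s - r)) * field_s b beta1 beta2 gam alph lam eps1 eps2 s i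
      + (s * (i - r)) * field_i b beta1 beta2 gam alph lam eps1 eps2 s i" by (simp only: pp)
    also have "\<dots> = (s * i * r - i * r) * b - s^2 * r * beta1 - s^2 * i * beta2 - r^2 * i * gam - i^2 * s * alph"
      unfolding Fs_def Gi_def field_s_def field_i_def r_def by (simp add: algebra_simps power2_eq_square)
    also have "\<dots> = s * i * r * ?R" using si r by (simp add: field_simps power2_eq_square)
    finally show ?thesis using nz by simp
  qed
  have neg: "(1 - 1/s) * b - (s/i) * beta1 - (s/r) * beta2 - (r/s) * gam - (i/r) * alph < 0"
  proof -
    have "1/s > 1" using si by simp
    hence "(1 - 1/s) * b < 0" using assms(1) by (simp add: mult_neg_pos)
    moreover have "(s/i) * beta1 > 0" "(s/r) * beta2 > 0" "(r/s) * gam > 0" "(i/r) * alph > 0"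
      using si r assms by auto
    ultimately show ?thesis by linarith
  qed
  have T: "Fs + Gi < 0" using key neg F0 G0 by simp
  show ?thesis
    unfolding hyperbolic_def J_def[symmetric]
  proof (intro allI impI notI)
    fix z assume ev: "is_eigenvalue J z" and re: "Re z = 0"
    have "z \<noteq> 0" using assms(12) ev unfolding nondegenerate_def J_def by auto
    have "(z - of_real Fs) * (z - of_real Gi) - of_real Fi * of_real Gs = 0"
      using ev unfolding is_eigenvalue_def by (simp add: det_2 J)
    hence "Im ((z - of_real Fs) * (z - of_real Gi) - of_real Fi * of_real Gs) = 0" by simp
    hence "Im z * (- Fs - Gi) = 0" using re by (simp add: algebra_simps)
    hence "Im z = 0" using T by simp
    thus False using re \<open>z \<noteq> 0\<close> complex_eqI by auto
  qed
qed

end
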